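(* Let $k\ge 3$ and $n_1,\dots,n_k\ge 2$, and let $r\in[k]$. If $k$ is even, then $MR_{n_1,\dots,n_k}\in\mathcal{O}(K_{n_1,\dots,n_k})$. If $k$ is odd, then $MR_{n_1,\dots,n_k}\in\mathcal{O}(CS^r_{n_1,\dots,n_k})$.
   Context: All three graphs are on the same vertex set $U_1\sqcup\cdots\sqcup U_k$ with $|U_i|=n_i$. $K_{n_1,\dots,n_k}$: edges exactly between different parts. Clique-star $CS^r_{n_1,\dots,n_k}$: each $U_i$ is a clique, all vertices of $U_r$ are adjacent to all vertices of every $U_i$, $i\ne r$, and no edges between $U_i,U_l$ for distinct $i,l\ne r$. Multi-leaf repeater $MR_{n_1,\dots,n_k}$: for each $i$ a vertex $w_i\in U_i$ is adjacent to the other $n_i-1$ vertices of $U_i$ (which are leaves), and $w_1,\dots,w_k$ form a clique; no other edges. The local complement $c_v(G)$ complements the edges among the neighbours of $v$; $\mathcal{O}(G)$ is the set of graphs on $V(G)$ obtainable from $G$ by finite sequences of local complements. *)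

theory Defs
  imports Main
begin

type_synonym 'v graph = "'v \<Rightarrow> 'v \<Rightarrow> bool"

text \<open>Vertex set U_0 \<union> ... \<union> U_(k-1), with U_i = {(i,j). j < n i}; parts indexed 0..k-1.\<close>
definition parts :: "nat \<Rightarrow> (nat \<Rightarrow> nat) \<Rightarrow> (nat \<times> nat) set" where
  "parts k n = {(i, j). i < k \<and> j < n i}"

definition local_complement :: "'v \<Rightarrow> 'v graph \<Rightarrow> 'v graph" where
  "local_complement v G = (\<lambda>x y. if x \<noteq> y \<and> G v x \<and> G v y then \<not> G x y else G x y)"

inductive_set lc_orbit :: "'v set \<Rightarrow> 'v graph \<Rightarrow> 'v graph set" for V G where
  refl: "G \<in> lc_orbit V G"
| step: "H \<in> lc_orbit V G \<Longrightarrow> v \<in> V \<Longrightarrow> local_complement v H \<in> lc_orbit V G"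

definition complete_multipartite :: "nat \<Rightarrow> (nat \<Rightarrow> nat) \<Rightarrow> (nat \<times> nat) graph" where
  "complete_multipartite k n = (\<lambda>x y. x \<in> parts k n \<and> y \<in> parts k n \<and> fst x \<noteq> fst y)"

definition clique_star :: "nat \<Rightarrow> nat \<Rightarrow> (nat \<Rightarrow> nat) \<Rightarrow> (nat \<times> nat) graph" where
  "clique_star r k n = (\<lambda>x y. x \<in> parts k n \<and> y \<in> parts k n \<and> x \<noteq> y \<and>
     (fst x = fst y \<or> fst x = r \<or> fst y = r))"

text \<open>Multi-leaf repeater with chosen centres w i \<in> U_i.\<close>
definition multi_leaf_repeater :: "nat \<Rightarrow> (nat \<Rightarrow> nat) \<Rightarrow> (nat \<Rightarrow> nat \<times> nat) \<Rightarrow> (nat \<times> nat) graph" where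
  "multi_leaf_repeater k n w = (\<lambda>x y. x \<in> parts k n \<and> y \<in> parts k n \<and> x \<noteq> y \<and>
     ((fst x = fst y \<and> (x = w (fst x) \<or> y = w (fst y))) \<or>
      (x = w (fst x) \<and> y = w (fst y))))"

end

theory Submission
  imports Defs
begin

definition Fg :: "nat \<Rightarrow> nat \<Rightarrow> (nat \<Rightarrow> nat) \<Rightarrow> (nat \<Rightarrow> nat \<times> nat) \<Rightarrow> nat \<Rightarrow> bool \<Rightarrow> (nat \<times> nat) graph" where
"Fg r k n w m c = (\<lambda>x y. x \<in> parts k n \<and> y \<in> parts k n \<and> x \<noteq> y \<and>
 (if fst x = r \<and> fst y = r then c
  else if fst x = r then (fst y < m \<longrightarrow> y = w (fst y))
  else if fst y = r then (fst x < m \<longrightarrow> x = w (fst x))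
  else if fst x = fst y then (fst x < m \<longrightarrow> x = w (fst x) \<or> y = w (fst y))
  else False))"

lemma wpart:
  assumes "\<forall>i<k. fst (w i) = i \<and> snd (w i) < n i" "i < k"
  shows "w i \<in> parts k n" "w i = (i, snd (w i))"
  using assms by (auto simp: parts_def intro: prod_eqI)

lemma nbr:
  assumes W: "\<forall>i<k. fst (w i) = i \<and> snd (w i) < n i" and m: "m < k" "m \<noteq> r"
  shows "Fg r k n w m c (w m) z \<longleftrightarrow> z \<in> parts k n \<and> z \<noteq> w m \<and> (fst z = r \<or> fst z = m)"
proof -
  have f: "fst (w m) = m" "w m \<in> parts k n" using W m by (auto simp: parts_def)
  show ?thesis unfolding Fg_def using f m by auto
qed

lemma step_lc:
  assumes W: "\<forall>i<k. fst (w i) = i \<and> snd (w i) < n i" and m: "m < k" "m \<noteq> r"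
  shows "local_complement (w m) (Fg r k n w m c) = Fg r k n w (Suc m) (\<not> c)"
proof (intro ext)
  fix x y :: "nat \<times> nat"
  have f: "fst (w m) = m" "w m \<in> parts k n" using W m by (auto simp: parts_def)
  have N: "\<And>z. Fg r k n w m c (w m) z \<longleftrightarrow> z \<in> parts k n \<and> z \<noteq> w m \<and> (fst z = r \<or> fst z = m)"
    using nbr[OF W m] .
  show "local_complement (w m) (Fg r k n w m c) x y = Fg r k n w (Suc m) (\<not> c) x y"
  proof (cases "x \<noteq> y \<and> Fg r k n w m c (w m) x \<and> Fg r k n w m c (w m) y")
    case True
    then have L: "local_complement (w m) (Fg r k n w m c) x y = (\<not> Fg r k n w m c x y)"
      unfolding local_complement_def by simp
    have px: "x \<in> parts k n" "y \<in> parts k n" "x \<noteq> w m" "y \<noteq> w m"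
       "fst x = r \<or> fst x = m" "fst y = r \<or> fst y = m" "x \<noteq> y" using True N by auto
    show ?thesis unfolding L
    proof (cases "fst x = r"; cases "fst y = r")
      assume "fst x = r" "fst y = r" then show "(\<not> Fg r k n w m c x y) = Fg r k n w (Suc m) (\<not> c) x y"
        using px by (simp add: Fg_def)
    next
      assume a: "fst x = r" "fst y \<noteq> r"
      then have "fst y = m" using px by simp
      then show "(\<not> Fg r k n w m c x y) = Fg r k n w (Suc m) (\<not> c) x y"
        using px a m by (simp add: Fg_def)
    next
      assume a: "fst x \<noteq> r" "fst y = r"
      then have "fst x = m" using px by simp
      then show "(\<not> Fg r k n w m c x y) = Fg r k n w (Suc m) (\<not> c) x y"
        using px a m by (simp add: Fg_def)
    next
      assume a: "fst x \<noteq> r" "fst y \<noteq> r"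
      then have "fst x = m" "fst y = m" using px by simp_all
      then show "(\<not> Fg r k n w m c x y) = Fg r k n w (Suc m) (\<not> c) x y"
        using px a m by (simp add: Fg_def)
    qed
  next
    case False
    then have L: "local_complement (w m) (Fg r k n w m c) x y = Fg r k n w m c x y"
      unfolding local_complement_def by auto
    have "Fg r k n w m c x y = Fg r k n w (Suc m) (\<not> c) x y"
    proof -
      consider "x = y" | "x \<notin> parts k n" | "y \<notin> parts k n" | "x = w m" | "y = w m"
        | "fst x \<noteq> r" "fst x \<noteq> m" | "fst y \<noteq> r" "fst y \<noteq> m" using False N by blast
      then show ?thesis
      proof cases
        case 1 then show ?thesis unfolding Fg_def by simp
      next
        case 2 then show ?thesis unfolding Fg_def by simp
      next
        case 3 then show ?thesis unfolding Fg_def by simp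
      next
        case 4 then show ?thesis using f m unfolding Fg_def by (simp add: less_Suc_eq)
      next
        case 5 then show ?thesis using f m unfolding Fg_def by (simp add: less_Suc_eq)
      next
        case 6 then show ?thesis unfolding Fg_def by (simp add: less_Suc_eq)
      next
        case 7 then show ?thesis unfolding Fg_def by (simp add: less_Suc_eq)
      qed
    qed
    then show ?thesis using L by simp
  qed
qed

lemma step_same:
  assumes "m = r"
  shows "Fg r k n w (Suc m) c = Fg r k n w m c"
  using assms unfolding Fg_def by (auto simp: less_Suc_eq intro!: ext)

definition par :: "nat \<Rightarrow> nat \<Rightarrow> bool \<Rightarrow> bool" where
  "par r m c = (if odd (m - (if r < m then 1 else 0)) then \<not> c else c)"

lemma par_same: "m = r \<Longrightarrow> par r (Suc m) c = par r m c"
  unfolding par_def by simp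

lemma par_flip: "m \<noteq> r \<Longrightarrow> par r (Suc m) c = (\<not> par r m c)"
proof (cases "r < m")
  case True
  then have "Suc m - 1 = Suc (m - 1)" "m - 1 + 1 = m" by auto
  then show "m \<noteq> r \<Longrightarrow> ?thesis" using True unfolding par_def by auto
next
  case False
  then show "m \<noteq> r \<Longrightarrow> ?thesis" unfolding par_def by auto
qed

lemma iter:
  assumes W: "\<forall>i<k. fst (w i) = i \<and> snd (w i) < n i" and start: "Fg r k n w 0 c \<in> lc_orbit (parts k n) G"
  shows "m \<le> k \<Longrightarrow> Fg r k n w m (par r m c) \<in> lc_orbit (parts k n) G"
proof (induction m)
  case 0
  have "par r 0 c = c" unfolding par_def by simp
  then show ?case using start by simp
next
  case (Suc m)
  then have IH: "Fg r k n w m (par r m c) \<in> lc_orbit (parts k n) G" and mk: "m < k" by auto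
  show ?case
  proof (cases "m = r")
    case True
    then show ?thesis using IH step_same[of m r k n w] par_same[of m r c] by simp
  next
    case False
    have wm: "w m \<in> parts k n" using wpart[OF W mk] by simp
    have "local_complement (w m) (Fg r k n w m (par r m c)) \<in> lc_orbit (parts k n) G"
      by (rule lc_orbit.step[OF IH wm])
    moreover have "local_complement (w m) (Fg r k n w m (par r m c)) = Fg r k n w (Suc m) (\<not> par r m c)"
      by (rule step_lc[OF W mk False])
    ultimately show ?thesis using par_flip[OF False, of c] by simp
  qed
qed

lemma K_lc:
  assumes W: "\<forall>i<k. w i = (i, s i) \<and> s i < n i" and r: "r < k"
  shows "local_complement (w r) (complete_multipartite k n) = Fg r k n w 0 False"
proof (intro ext)
  fix x y :: "nat \<times> nat"
  obtain a b c d where xy: "x = (a, b)" "y = (c, d)" by fastforce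
  show "local_complement (w r) (complete_multipartite k n) x y = Fg r k n w 0 False x y"
    using W r unfolding xy local_complement_def complete_multipartite_def Fg_def parts_def
    by auto
qed

lemma CS_eq:
  shows "clique_star r k n = Fg r k n w 0 True"
  unfolding clique_star_def Fg_def by (intro ext) auto

lemma MR_lc:
  assumes W: "\<forall>i<k. w i = (i, s i) \<and> s i < n i" and r: "r < k"
  shows "local_complement (w r) (Fg r k n w k True) = multi_leaf_repeater k n w"
proof (intro ext)
  fix x y :: "nat \<times> nat"
  obtain a b c d where xy: "x = (a, b)" "y = (c, d)" by fastforce
  show "local_complement (w r) (Fg r k n w k True) x y = multi_leaf_repeater k n w x y"
    using W r unfolding xy local_complement_def multi_leaf_repeater_def Fg_def parts_def
    by auto
qed

lemma W'_ex:
  assumes W: "\<forall>i<k. fst (w i) = i \<and> snd (w i) < n i"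
  shows "\<exists>s. \<forall>i<k. w i = (i, s i) \<and> s i < n i"
proof
  show "\<forall>i<k. w i = (i, snd (w i)) \<and> snd (w i) < n i"
    using W by (auto intro: prod_eqI)
qed

lemma fin_step:
  assumes W: "\<forall>i<k. fst (w i) = i \<and> snd (w i) < n i" and rk: "r < k"
    and H: "Fg r k n w k True \<in> lc_orbit (parts k n) G"
  shows "multi_leaf_repeater k n w \<in> lc_orbit (parts k n) G"
proof -
  obtain s where W': "\<forall>i<k. w i = (i, s i) \<and> s i < n i" using W'_ex[OF W] by blast
  have wr: "w r \<in> parts k n" using wpart[OF W rk] by simp
  have "local_complement (w r) (Fg r k n w k True) \<in> lc_orbit (parts k n) G"
    by (rule lc_orbit.step[OF H wr])
  then show ?thesis unfolding MR_lc[OF W' rk] .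
qed

lemma even_case:
  assumes k: "k \<ge> 3" and W: "\<forall>i<k. fst (w i) = i \<and> snd (w i) < n i" and rk: "r < k"
    and ev: "even k"
  shows "multi_leaf_repeater k n w \<in> lc_orbit (parts k n) (complete_multipartite k n)"
proof -
  obtain s where W': "\<forall>i<k. w i = (i, s i) \<and> s i < n i" using W'_ex[OF W] by blast
  have wr: "w r \<in> parts k n" using wpart[OF W rk] by simp
  have "local_complement (w r) (complete_multipartite k n) \<in> lc_orbit (parts k n) (complete_multipartite k n)"
    by (rule lc_orbit.step[OF lc_orbit.refl wr])
  then have st: "Fg r k n w 0 False \<in> lc_orbit (parts k n) (complete_multipartite k n)"
    unfolding K_lc[OF W' rk] .
  have pk: "par r k False = True" using rk k ev unfolding par_def by simp
  have "Fg r k n w k (par r k False) \<in> lc_orbit (parts k n) (complete_multipartite k n)"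
    by (rule iter[OF W st]) simp
  then show ?thesis using fin_step[OF W rk] pk by simp
qed

lemma odd_case:
  assumes k: "k \<ge> 3" and W: "\<forall>i<k. fst (w i) = i \<and> snd (w i) < n i" and rk: "r < k"
    and od: "odd k"
  shows "multi_leaf_repeater k n w \<in> lc_orbit (parts k n) (clique_star r k n)"
proof -
  have st: "Fg r k n w 0 True \<in> lc_orbit (parts k n) (clique_star r k n)"
    unfolding CS_eq[symmetric, of r k n w] by (rule lc_orbit.refl)
  have pk: "par r k True = True" using rk k od unfolding par_def by simp
  have "Fg r k n w k (par r k True) \<in> lc_orbit (parts k n) (clique_star r k n)"
    by (rule iter[OF W st]) simp
  then show ?thesis using fin_step[OF W rk] pk by simp
qed

theorem theorem9:
  fixes k r :: nat and n :: "nat \<Rightarrow> nat" and w :: "nat \<Rightarrow> nat \<times> nat"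
  assumes "k \<ge> 3"
    and "\<forall>i<k. n i \<ge> 2"
    and "r < k"
    and "\<forall>i<k. fst (w i) = i \<and> snd (w i) < n i"
  shows "(even k \<longrightarrow> multi_leaf_repeater k n w \<in> lc_orbit (parts k n) (complete_multipartite k n))
       \<and> (odd k \<longrightarrow> multi_leaf_repeater k n w \<in> lc_orbit (parts k n) (clique_star r k n))"
  using even_case[OF assms(1,4,3)] odd_case[OF assms(1,4,3)] by blast

end
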